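(* Let $U_1,U_2$ be two users at fixed positions $(x_1,y_1),(x_2,y_2)\in\mathbb{R}^2$ with distances $d_k=\sqrt{x_k^2+y_k^2}$ from a base station at the origin, where $d_1<d_2$. Let the estimated positions be $(\hat x_k,\hat y_k)$ with $\hat x_k\sim\mathcal N(x_k,\sigma_{ob}^2)$, $\hat y_k\sim\mathcal N(y_k,\sigma_{ob}^2)$, $\sigma_{ob}>0$, all four estimates mutually independent, and let $\hat d_k=\sqrt{\hat x_k^2+\hat y_k^2}$. Then, in the fading-free scenario, the decoding order error probability is $$P_e^1=\Pr\{\hat d_1>\hat d_2\}=\sum_{i=0}^{\infty}\sum_{j=0}^{\infty}P_{\lambda_1\beta}(i)\,P_{\lambda_2\beta}(j)\,I_{i,j},$$ where $\beta=\frac{1}{2\sigma_{ob}^2}$, $\lambda_k=d_k^2$ ($k=1,2$), $P_{\mu}(n)=\frac{e^{-\mu}\mu^n}{n!}$ ($n\ge 0$) is the Poisson probability mass function with mean $\mu$, and $$I_{i,j}=\left(\tfrac12\right)^{(i+1)+(j+1)}\binom{(i+1)+(j+1)-1}{j+1}\,F\!\left(1,(i+1)+(j+1);(j+1)+1;\tfrac12\right),$$ with $F(a,b;c;z)$ the Gauss hypergeometric function.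
   Context: In the fading-free scenario the channel gain of user $U_k$ is $d_k^{-\alpha}$ (path loss only), so since $d_1<d_2$ the correct (channel-based) decoding order has $U_1$ as the stronger user; a decoding order error occurs exactly when the estimated distances are in the wrong order, i.e. $\hat d_1>\hat d_2$. In the paper the exponents are written $\alpha_i=i+1$ and $\alpha_j=j+1$. *)

theory Defs
  imports "HOL-Probability.Probability"
begin

definition poisson_pmf_val :: "real \<Rightarrow> nat \<Rightarrow> real" where
  "poisson_pmf_val mu n = exp (- mu) * mu ^ n / fact n"

definition hyp2F1 :: "real \<Rightarrow> real \<Rightarrow> real \<Rightarrow> real \<Rightarrow> real" where
  "hyp2F1 a b c z = (\<Sum>n. pochhammer a n * pochhammer b n / (pochhammer c n * fact n) * z ^ n)"

end

theory Submission
  imports Defs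
begin



lemma L_SUB_set:
  fixes c :: real and A :: "real set"
  assumes c: "c > 0" and A: "A \<in> sets borel"
  shows "(\<integral>\<^sup>+t. indicator A t * indicator {0<..} t \<partial>lborel) =
         (\<integral>\<^sup>+a. indicator A (c*a\<^sup>2) * ennreal (2*c*a) * indicator {0<..} a \<partial>lborel)"
proof -
  have sub: "(\<integral>\<^sup>+t. ennreal (indicator A t * indicator {c*0\<^sup>2..c*(real n)\<^sup>2} t) \<partial>lborel) =
        (\<integral>\<^sup>+a. ennreal (indicator A (c*a\<^sup>2) * (2*c*a) * indicator {0..real n} a) \<partial>lborel)" for n :: nat
    by (rule nn_integral_substitution[where g="\<lambda>a. c*a\<^sup>2" and g'="\<lambda>a. 2*c*a" and a=0 and b="real n"])
       (use A c in \<open>auto intro!: derivative_eq_intros continuous_intros simp: set_borel_measurable_def\<close>)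
  have L: "(\<integral>\<^sup>+t. indicator A t * indicator {0<..} t \<partial>lborel) =
        (SUP n. \<integral>\<^sup>+t. ennreal (indicator A t * indicator {c*0\<^sup>2..c*(real n)\<^sup>2} t) \<partial>lborel)"
  proof -
    have "(\<integral>\<^sup>+t. indicator A t * indicator {0<..} t \<partial>lborel) =
          (\<integral>\<^sup>+t. indicator A t * indicator {0..} t \<partial>lborel)"
      by (intro nn_integral_cong_AE eventually_mono[OF AE_lborel_singleton[of 0]]) (auto simp: indicator_def)
    also have "\<dots> = (\<integral>\<^sup>+t. (SUP n. ennreal (indicator A t * indicator {c*0\<^sup>2..c*(real n)\<^sup>2} t)) \<partial>lborel)"
    proof (intro nn_integral_cong)
      fix t :: real
      show "indicator A t * indicator {0..} t = (SUP n. ennreal (indicator A t * indicator {c*0\<^sup>2..c*(real n)\<^sup>2} t))"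
      proof (cases "t \<ge> 0")
        case True
        obtain n :: nat where "t / c \<le> real n" using real_arch_simple by blast
        hence "t \<le> c * real n" using c by (simp add: field_simps)
        also have "\<dots> \<le> c * (real n)\<^sup>2" using c by (cases n) (auto simp: power2_eq_square)
        finally have tn: "t \<le> c * (real n)\<^sup>2" .
        have "(SUP n. ennreal (indicator A t * indicator {c*0\<^sup>2..c*(real n)\<^sup>2} t)) = ennreal (indicator A t)"
        proof (rule antisym)
          show "(SUP n. ennreal (indicator A t * indicator {c*0\<^sup>2..c*(real n)\<^sup>2} t)) \<le> ennreal (indicator A t)"
            by (intro SUP_least) (auto simp: indicator_def)
          show "ennreal (indicator A t) \<le> (SUP n. ennreal (indicator A t * indicator {c*0\<^sup>2..c*(real n)\<^sup>2} t))"
            by (rule SUP_upper2[of n]) (use True tn in \<open>auto simp: indicator_def\<close>)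
        qed
        then show ?thesis using True by (simp add: indicator_def)
      qed (auto simp: indicator_def)
    qed
    also have "\<dots> = (SUP n. \<integral>\<^sup>+t. ennreal (indicator A t * indicator {c*0\<^sup>2..c*(real n)\<^sup>2} t) \<partial>lborel)"
    proof (rule nn_integral_monotone_convergence_SUP)
      have mono: "\<And>m n. m \<le> n \<Longrightarrow> c*(real m)\<^sup>2 \<le> c*(real n)\<^sup>2"
        using c by (auto intro!: mult_left_mono power_mono)
      show "incseq (\<lambda>n t. ennreal (indicator A t * indicator {c*0\<^sup>2..c*(real n)\<^sup>2} t))"
        using c by (auto simp: incseq_def le_fun_def indicator_def intro!: ennreal_leI dest: order_trans[OF _ mono])
    qed (use A in auto)
    finally show ?thesis .
  qed
  have R: "(\<integral>\<^sup>+a. indicator A (c*a\<^sup>2) * ennreal (2*c*a) * indicator {0<..} a \<partial>lborel) =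
        (SUP n. \<integral>\<^sup>+a. ennreal (indicator A (c*a\<^sup>2) * (2*c*a) * indicator {0..real n} a) \<partial>lborel)"
  proof -
    have "(\<integral>\<^sup>+a. indicator A (c*a\<^sup>2) * ennreal (2*c*a) * indicator {0<..} a \<partial>lborel) =
          (\<integral>\<^sup>+a. (SUP n. ennreal (indicator A (c*a\<^sup>2) * (2*c*a) * indicator {0..real n} a)) \<partial>lborel)"
    proof (intro nn_integral_cong)
      fix a :: real
      show "indicator A (c*a\<^sup>2) * ennreal (2*c*a) * indicator {0<..} a =
            (SUP n. ennreal (indicator A (c*a\<^sup>2) * (2*c*a) * indicator {0..real n} a))"
      proof (cases "a > 0")
        case True
        obtain n :: nat where an: "a \<le> real n" using real_arch_simple by blast
        have "(SUP n. ennreal (indicator A (c*a\<^sup>2) * (2*c*a) * indicator {0..real n} a)) = ennreal (indicator A (c*a\<^sup>2) * (2*c*a))"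
        proof (rule antisym)
          show "(SUP n. ennreal (indicator A (c*a\<^sup>2) * (2*c*a) * indicator {0..real n} a)) \<le> ennreal (indicator A (c*a\<^sup>2) * (2*c*a))"
            using True c by (intro SUP_least ennreal_leI) (auto simp: indicator_def)
          show "ennreal (indicator A (c*a\<^sup>2) * (2*c*a)) \<le> (SUP n. ennreal (indicator A (c*a\<^sup>2) * (2*c*a) * indicator {0..real n} a))"
            by (rule SUP_upper2[of n]) (use True an in \<open>auto simp: indicator_def\<close>)
        qed
        then show ?thesis using True c by (simp add: indicator_def ennreal_mult')
      next
        case False
        then show ?thesis by (auto simp: indicator_def)
      qed
    qed
    also have "\<dots> = (SUP n. \<integral>\<^sup>+a. ennreal (indicator A (c*a\<^sup>2) * (2*c*a) * indicator {0..real n} a) \<partial>lborel)"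
    proof (rule nn_integral_monotone_convergence_SUP)
      show "incseq (\<lambda>n a. ennreal (indicator A (c*a\<^sup>2) * (2*c*a) * indicator {0..real n} a))"
        using c by (auto simp: incseq_def le_fun_def indicator_def intro!: ennreal_leI)
    qed (use A in auto)
    finally show ?thesis .
  qed
  show ?thesis unfolding L R sub ..
qed

lemma L_SUB:
  fixes c :: real and f :: "real \<Rightarrow> ennreal"
  assumes c: "c > 0" and f: "f \<in> borel_measurable borel"
  shows "(\<integral>\<^sup>+t. f t * indicator {0<..} t \<partial>lborel) =
         (\<integral>\<^sup>+a. f (c*a\<^sup>2) * ennreal (2*c*a) * indicator {0<..} a \<partial>lborel)"
  using f
proof (induction rule: borel_measurable_induct)
  case (cong f g)
  then show ?case by simp
next
  case (set A)
  then show ?case using L_SUB_set[OF c] by simp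
next
  case (mult u k)
  have "(\<integral>\<^sup>+t. k * u t * indicator {0<..} t \<partial>lborel) = k * (\<integral>\<^sup>+t. u t * indicator {0<..} t \<partial>lborel)"
    using mult by (subst nn_integral_cmult[symmetric]) (auto simp: mult.assoc)
  also have "\<dots> = k * (\<integral>\<^sup>+a. u (c*a\<^sup>2) * ennreal (2*c*a) * indicator {0<..} a \<partial>lborel)"
    using mult by simp
  also have "\<dots> = (\<integral>\<^sup>+a. k * u (c*a\<^sup>2) * ennreal (2*c*a) * indicator {0<..} a \<partial>lborel)"
    using mult by (subst nn_integral_cmult[symmetric]) (auto simp: mult.assoc)
  finally show ?case .
next
  case (add u v)
  have "(\<integral>\<^sup>+t. (v t + u t) * indicator {0<..} t \<partial>lborel) =
        (\<integral>\<^sup>+t. v t * indicator {0<..} t \<partial>lborel) + (\<integral>\<^sup>+t. u t * indicator {0<..} t \<partial>lborel)"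
    using add by (subst nn_integral_add[symmetric]) (auto simp: distrib_right)
  also have "\<dots> = (\<integral>\<^sup>+a. v (c*a\<^sup>2) * ennreal (2*c*a) * indicator {0<..} a \<partial>lborel) +
                    (\<integral>\<^sup>+a. u (c*a\<^sup>2) * ennreal (2*c*a) * indicator {0<..} a \<partial>lborel)"
    using add by simp
  also have "\<dots> = (\<integral>\<^sup>+a. (v (c*a\<^sup>2) + u (c*a\<^sup>2)) * ennreal (2*c*a) * indicator {0<..} a \<partial>lborel)"
    using add by (subst nn_integral_add[symmetric]) (auto simp: distrib_right)
  finally show ?case .
next
  case (seq U)
  have "(\<integral>\<^sup>+t. (SUP i. U i) t * indicator {0<..} t \<partial>lborel) =
        (\<integral>\<^sup>+t. (SUP i. U i t * indicator {0<..} t) \<partial>lborel)"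
    by (intro nn_integral_cong) (simp add: SUP_mult_right_ennreal image_comp)
  also have "\<dots> = (SUP i. \<integral>\<^sup>+t. U i t * indicator {0<..} t \<partial>lborel)"
    using seq by (intro nn_integral_monotone_convergence_SUP)
      (auto simp: incseq_def le_fun_def intro!: mult_right_mono)
  also have "\<dots> = (SUP i. \<integral>\<^sup>+a. U i (c*a\<^sup>2) * ennreal (2*c*a) * indicator {0<..} a \<partial>lborel)"
    using seq by simp
  also have "\<dots> = (\<integral>\<^sup>+a. (SUP i. U i (c*a\<^sup>2) * ennreal (2*c*a) * indicator {0<..} a) \<partial>lborel)"
    using seq by (intro nn_integral_monotone_convergence_SUP[symmetric])
      (auto simp: incseq_def le_fun_def intro!: mult_right_mono)
  also have "\<dots> = (\<integral>\<^sup>+a. (SUP i. U i) (c*a\<^sup>2) * ennreal (2*c*a) * indicator {0<..} a \<partial>lborel)"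
    by (intro nn_integral_cong) (simp add: SUP_mult_right_ennreal image_comp)
  finally show ?case .
qed



definition gd :: "real \<Rightarrow> real \<Rightarrow> real" where
  "gd a t = (if 0 < t then t powr (a - 1) * exp (- t) / Gamma a else 0)"

lemma gd_nonneg: "a > 0 \<Longrightarrow> 0 \<le> gd a t"
  by (auto simp: gd_def intro!: divide_nonneg_pos Gamma_real_pos)

lemma gd_measurable[measurable]: "gd a \<in> borel_measurable borel"
  unfolding gd_def by measurable

lemma L_beta_int:
  fixes a b u :: real
  assumes a: "a > 0" and b: "b > 0" and u: "u > 0"
  shows "(\<integral>\<^sup>+s. ennreal (indicator {0<..<u} s * s powr (a - 1) * (u - s) powr (b - 1)) \<partial>lborel)
         = ennreal (u powr (a + b - 1) * Beta a b)"
proof -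
  let ?F = "\<lambda>s. ennreal (indicator {0<..<u} s * s powr (a - 1) * (u - s) powr (b - 1))"
  have "(\<integral>\<^sup>+s. ?F s \<partial>lborel) = (\<integral>\<^sup>+v. ?F (u * v) \<partial>distr lborel borel ((*) (1 / u)))"
    using u by (subst nn_integral_distr) (auto intro!: nn_integral_cong)
  also have "distr lborel borel ((*) (1 / u)) = density lborel (\<lambda>_. u)"
    using u by (subst lborel_distr_mult) auto
  also have "(\<integral>\<^sup>+v. ?F (u * v) \<partial>density lborel (\<lambda>_. u)) = (\<integral>\<^sup>+v. ennreal u * ?F (u * v) \<partial>lborel)"
    by (subst nn_integral_density) auto
  also have "\<dots> = (\<integral>\<^sup>+v. ennreal (u powr (a + b - 1)) *
                   ennreal (indicator {0..1} v * (v powr (a - 1) * (1 - v) powr (b - 1))) \<partial>lborel)"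
  proof (intro nn_integral_cong)
    fix v :: real
    show "ennreal u * ?F (u * v) = ennreal (u powr (a + b - 1)) *
                   ennreal (indicator {0..1} v * (v powr (a - 1) * (1 - v) powr (b - 1)))"
    proof (cases "0 < v \<and> v < 1")
      case True
      have "u * (u * v) powr (a - 1) * (u - u * v) powr (b - 1) =
            u powr (a + b - 1) * (v powr (a - 1) * (1 - v) powr (b - 1))"
      proof -
        have "u - u * v = u * (1 - v)" by (simp add: algebra_simps)
        then have "u * (u * v) powr (a - 1) * (u - u * v) powr (b - 1) =
             u powr 1 * (u powr (a - 1) * v powr (a - 1)) * (u powr (b - 1) * (1 - v) powr (b - 1))"
          using u True by (simp add: powr_mult)
        also have "\<dots> = (u powr 1 * u powr (a - 1) * u powr (b - 1)) * (v powr (a - 1) * (1 - v) powr (b - 1))"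
          by (simp add: mult_ac)
        also have "u powr 1 * u powr (a - 1) * u powr (b - 1) = u powr (a + b - 1)"
          using u by (simp only: powr_add[symmetric]) (simp add: algebra_simps)
        finally show ?thesis .
      qed
      then show ?thesis using True u
        by (simp add: indicator_def ennreal_mult'[symmetric] mult.assoc)
    next
      case False
      then have "v \<le> 0 \<or> v \<ge> 1" by auto
      then show ?thesis using u a b
        by (auto simp: indicator_def mult_le_0_iff not_less)
    qed
  qed
  also have "\<dots> = ennreal (u powr (a + b - 1)) * (\<integral>\<^sup>+v. ennreal (indicator {0..1} v * (v powr (a - 1) * (1 - v) powr (b - 1))) \<partial>lborel)"
    by (subst nn_integral_cmult) auto
  also have "(\<integral>\<^sup>+v. ennreal (indicator {0..1} v * (v powr (a - 1) * (1 - v) powr (b - 1))) \<partial>lborel) = ennreal (Beta a b)"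
    by (rule nn_integral_has_integral_lebesgue) (use has_integral_Beta_real[OF a b] in auto)
  finally show ?thesis using u by (simp add: ennreal_mult'[symmetric])
qed

lemma L_gd_conv_point:
  fixes a b u :: real
  assumes a: "a > 0" and b: "b > 0"
  shows "(\<integral>\<^sup>+s. ennreal (gd a s * gd b (u - s)) \<partial>lborel) = ennreal (gd (a + b) u)"
proof (cases "u > 0")
  case u: True
  have "(\<integral>\<^sup>+s. ennreal (gd a s * gd b (u - s)) \<partial>lborel) =
        (\<integral>\<^sup>+s. ennreal (exp (- u) / (Gamma a * Gamma b)) *
              ennreal (indicator {0<..<u} s * s powr (a - 1) * (u - s) powr (b - 1)) \<partial>lborel)"
  proof (intro nn_integral_cong)
    fix s :: real
    have ga: "Gamma a > 0" "Gamma b > 0" using a b by (auto intro: Gamma_real_pos)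
    show "ennreal (gd a s * gd b (u - s)) = ennreal (exp (- u) / (Gamma a * Gamma b)) *
              ennreal (indicator {0<..<u} s * s powr (a - 1) * (u - s) powr (b - 1))"
    proof (cases "0 < s \<and> s < u")
      case True
      have "exp (- s) * exp (- (u - s)) = exp (- u)" by (simp add: exp_add[symmetric])
      then have "gd a s * gd b (u - s) = exp (- u) / (Gamma a * Gamma b) * (s powr (a - 1) * (u - s) powr (b - 1))"
        using True by (simp add: gd_def field_simps)
      then show ?thesis using True ga
        by (simp add: indicator_def ennreal_mult'[symmetric])
    next
      case False
      then show ?thesis by (auto simp: gd_def indicator_def)
    qed
  qed
  also have "\<dots> = ennreal (exp (- u) / (Gamma a * Gamma b)) * ennreal (u powr (a + b - 1) * Beta a b)"
    by (subst nn_integral_cmult) (auto simp: L_beta_int[OF a b u])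
  also have "\<dots> = ennreal (gd (a + b) u)"
  proof -
    have ga: "Gamma a > 0" "Gamma b > 0" "Gamma (a + b) > 0" using a b by (auto intro: Gamma_real_pos)
    have "exp (- u) / (Gamma a * Gamma b) * (u powr (a + b - 1) * Beta a b) = gd (a + b) u"
      using ga u by (simp add: gd_def Beta_def field_simps)
    then show ?thesis using ga by (simp add: ennreal_mult'[symmetric])
  qed
  finally show ?thesis .
next
  case False
  have z: "\<And>s. gd a s * gd b (u - s) = 0"
    using False by (auto simp: gd_def)
  have "gd (a + b) u = 0" using False by (simp add: gd_def)
  then show ?thesis by (simp add: z)
qed

lemma L_B:
  fixes a b :: real and H :: "real \<Rightarrow> ennreal"
  assumes a: "a > 0" and b: "b > 0" and H[measurable]: "H \<in> borel_measurable borel"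
  shows "(\<integral>\<^sup>+s. \<integral>\<^sup>+t. ennreal (gd a s * gd b t) * H (s + t) \<partial>lborel \<partial>lborel) =
         (\<integral>\<^sup>+u. ennreal (gd (a + b) u) * H u \<partial>lborel)"
proof -
  have "(\<integral>\<^sup>+s. \<integral>\<^sup>+t. ennreal (gd a s * gd b t) * H (s + t) \<partial>lborel \<partial>lborel) =
        (\<integral>\<^sup>+s. \<integral>\<^sup>+u. ennreal (gd a s * gd b (u - s)) * H u \<partial>lborel \<partial>lborel)"
  proof (rule nn_integral_cong)
    fix s :: real
    have "(\<integral>\<^sup>+t. ennreal (gd a s * gd b t) * H (s + t) \<partial>distr lborel borel ((+) (-s))) =
          (\<integral>\<^sup>+u. ennreal (gd a s * gd b (u - s)) * H u \<partial>lborel)"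
      by (subst nn_integral_distr) (auto intro!: nn_integral_cong)
    then show "(\<integral>\<^sup>+t. ennreal (gd a s * gd b t) * H (s + t) \<partial>lborel) =
          (\<integral>\<^sup>+u. ennreal (gd a s * gd b (u - s)) * H u \<partial>lborel)"
      by (simp add: lborel_distr_plus)
  qed
  also have "\<dots> = (\<integral>\<^sup>+u. \<integral>\<^sup>+s. ennreal (gd a s * gd b (u - s)) * H u \<partial>lborel \<partial>lborel)"
    by (rule lborel_pair.Fubini') measurable
  also have "\<dots> = (\<integral>\<^sup>+u. ennreal (gd (a + b) u) * H u \<partial>lborel)"
  proof (rule nn_integral_cong)
    fix u :: real
    show "(\<integral>\<^sup>+s. ennreal (gd a s * gd b (u - s)) * H u \<partial>lborel) = ennreal (gd (a + b) u) * H u"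
      by (subst nn_integral_multc) (auto simp: L_gd_conv_point[OF a b])
  qed
  finally show ?thesis .
qed



lemma Gamma_half_nat: "Gamma (real k + 1/2) = fact (2*k) * sqrt pi / (4^k * fact k)"
proof (induction k)
  case 0
  then show ?case by (simp add: Gamma_one_half_real)
next
  case (Suc k)
  have "Gamma (real (Suc k) + 1/2) = (real k + 1/2) * Gamma (real k + 1/2)"
  proof -
    have "real k + 1/2 \<notin> \<int>\<^sub>\<le>\<^sub>0" by (auto dest: nonpos_Ints_nonpos)
    then show ?thesis using Gamma_plus1[of "real k + 1/2"] by (simp add: add_ac)
  qed
  also have "\<dots> = (real k + 1/2) * (fact (2*k) * sqrt pi / (4^k * fact k))" using Suc by simp
  also have "\<dots> = fact (2*Suc k) * sqrt pi / (4^Suc k * fact (Suc k))"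
  proof -
    have f2: "fact (2 * Suc k) = (2*real k + 2) * (2*real k + 1) * (fact (2*k) :: real)"
      by (simp add: numeral_2_eq_2 algebra_simps)
    have f1: "fact (Suc k) = (real k + 1) * (fact k :: real)" by simp
    have gen0: "(r + 1/2) * (X / Y) = (2*r + 2) * (2*r + 1) * X / (4 * Y * (r + 1))"
      if "r \<ge> 0" "Y \<noteq> 0" for r X Y :: real
    proof -
      have r1: "r + 1 \<noteq> 0" using that by simp
      have "(2*r + 2) * (2*r + 1) * X / (4 * Y * (r + 1)) = ((r+1) * ((2*r+1)*X*2)) / ((r+1) * (4*Y))"
        by (simp add: algebra_simps)
      also have "\<dots> = ((2*r+1)*X*2) / (4*Y)" using r1 by (rule mult_divide_mult_cancel_left)
      also have "\<dots> = (r + 1/2) * (X / Y)" using that by (simp add: field_simps)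
      finally show ?thesis by simp
    qed
    have gen: "(r + 1/2) * (F * S / (P * K)) = (2*r + 2) * (2*r + 1) * F * S / (4 * P * ((r + 1) * K))"
      if "r \<ge> 0" "P * K \<noteq> 0" for r F S P K :: real
      using gen0[of r "P*K" "F*S"] that by (simp add: mult_ac)
    show ?thesis unfolding f2 f1 power_Suc by (rule gen) auto
  qed
  finally show ?case .
qed

lemma exp_pm_sums: "(\<lambda>k. 2 * z^(2*k) / fact (2*k)) sums (exp z + exp (- z :: real))"
proof -
  have "(\<lambda>n. z^n / fact n + (-z)^n / fact n) sums (exp z + exp (-z))"
    by (intro sums_add) (use exp_converges[of z] exp_converges[of "-z"] in \<open>simp_all add: field_simps\<close>)
  then have "(\<lambda>n. (z^n + (-z)^n) / fact n) sums (exp z + exp (-z))"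
    by (simp add: add_divide_distrib)
  moreover have "(z^n + (-z)^n) / fact n = 0" if "n \<notin> range (\<lambda>k. 2*k)" for n
  proof -
    have "odd n" using that by (auto elim!: evenE)
    then show ?thesis by (simp add: power_minus_odd)
  qed
  ultimately have "(\<lambda>k. (z^(2*k) + (-z)^(2*k)) / fact (2*k)) sums (exp z + exp (-z))"
    using sums_mono_reindex[of "\<lambda>k. 2*k" "\<lambda>n. (z^n + (-z)^n) / fact n"]
    by (simp add: strict_mono_def o_def)
  then show ?thesis by simp
qed

lemma w_eq:
  fixes a c x :: real
  assumes c: "c > 0" and a: "a > 0"
  shows "poisson_pmf_val (x\<^sup>2*c) k * gd (real k + 1/2) (c*a\<^sup>2) * (2*c*a) =
         sqrt c / sqrt pi * exp (-(a\<^sup>2+x\<^sup>2)*c) * (2 * (2*c*a*x)^(2*k) / fact (2*k))"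
proof -
  define s where "s = sqrt c"
  have s: "s > 0" "c = s\<^sup>2" using c by (auto simp: s_def)
  have ca: "c*a\<^sup>2 > 0" using c a by simp
  have h1: "(c*a\<^sup>2) powr (real k + 1/2 - 1) = (c*a\<^sup>2)^k / (s * a)"
  proof -
    have "(c*a\<^sup>2) powr (real k + 1/2 - 1) = (c*a\<^sup>2) powr (real k) / (c*a\<^sup>2) powr (1/2)"
      using ca by (simp add: powr_diff[symmetric])
    also have "(c*a\<^sup>2) powr (real k) = (c*a\<^sup>2)^k" using ca by (simp add: powr_realpow)
    also have "(c*a\<^sup>2) powr (1/2) = sqrt (c*a\<^sup>2)" using ca by (simp add: powr_half_sqrt)
    also have "sqrt (c*a\<^sup>2) = s * a" using a c by (simp add: s_def real_sqrt_mult)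
    finally show ?thesis .
  qed
  have h2: "(2*c*a*x)^(2*k) = 4^k * (x\<^sup>2*c)^k * (c*a\<^sup>2)^k"
  proof -
    have "(2*c*a*x)^(2*k) = ((2*c*a*x)\<^sup>2)^k" by (simp add: power_mult)
    also have "(2*c*a*x)\<^sup>2 = 4 * (x\<^sup>2*c) * (c*a\<^sup>2)" by (simp add: power2_eq_square)
    finally show ?thesis by (simp add: power_mult_distrib)
  qed
  have h3: "exp (- (x\<^sup>2*c)) * exp (- (c*a\<^sup>2)) = exp (-(a\<^sup>2+x\<^sup>2)*c)"
    by (simp add: exp_add[symmetric] algebra_simps)
  have G: "Gamma (real k + 1/2) = fact (2*k) * sqrt pi / (4^k * fact k)" by (rule Gamma_half_nat)
  have "poisson_pmf_val (x\<^sup>2*c) k * gd (real k + 1/2) (c*a\<^sup>2) * (2*c*a) =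
        (exp (- (x\<^sup>2*c)) * exp (- (c*a\<^sup>2))) * ((x\<^sup>2*c)^k * (c*a\<^sup>2)^k) * (2*c*a) / (s * a) * 4^k / (fact (2*k) * sqrt pi)"
    using ca unfolding poisson_pmf_val_def gd_def h1 G by (simp add: field_simps)
  also have "\<dots> = exp (-(a\<^sup>2+x\<^sup>2)*c) * (4^k * (x\<^sup>2*c)^k * (c*a\<^sup>2)^k) * 2 * s / (fact (2*k) * sqrt pi)"
    unfolding h3 using s a by (simp add: field_simps power2_eq_square)
  also have "\<dots> = sqrt c / sqrt pi * exp (-(a\<^sup>2+x\<^sup>2)*c) * (2 * (2*c*a*x)^(2*k) / fact (2*k))"
    unfolding h2 s_def by (simp add: field_simps)
  finally show ?thesis .
qed

lemma phi_sum:
  fixes a x \<sigma> :: real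
  assumes \<sigma>: "\<sigma> > 0"
  defines "c \<equiv> 1 / (2 * \<sigma>\<^sup>2)"
  shows "normal_density x \<sigma> a + normal_density x \<sigma> (-a) =
         sqrt c / sqrt pi * exp (-(a\<^sup>2+x\<^sup>2)*c) * (exp (2*c*a*x) + exp (- (2*c*a*x)))"
proof -
  have c: "c > 0" using \<sigma> by (simp add: c_def)
  have K: "1 / sqrt (2 * pi * \<sigma>\<^sup>2) = sqrt c / sqrt pi"
    using \<sigma> by (simp add: c_def real_sqrt_mult real_sqrt_divide field_simps)
  have e1: "exp (- (a - x)\<^sup>2 / (2 * \<sigma>\<^sup>2)) = exp (-(a\<^sup>2+x\<^sup>2)*c) * exp (2*c*a*x)"
    unfolding exp_add[symmetric] using \<sigma> by (simp add: c_def field_simps power2_eq_square)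
  have e2: "exp (- (- a - x)\<^sup>2 / (2 * \<sigma>\<^sup>2)) = exp (-(a\<^sup>2+x\<^sup>2)*c) * exp (- (2*c*a*x))"
    unfolding exp_add[symmetric] using \<sigma> by (simp add: c_def field_simps power2_eq_square)
  show ?thesis unfolding normal_density_def K e1 e2 by (simp add: algebra_simps add_divide_distrib)
qed

lemma reflect:
  fixes F :: "real \<Rightarrow> ennreal"
  assumes F[measurable]: "F \<in> borel_measurable borel"
  shows "(\<integral>\<^sup>+a. F a \<partial>lborel) = (\<integral>\<^sup>+a. (F a + F (-a)) * indicator {0<..} a \<partial>lborel)"
proof -
  have "(\<integral>\<^sup>+a. F a \<partial>lborel) = (\<integral>\<^sup>+a. F a * indicator {0<..} a + F a * indicator {..0} a \<partial>lborel)"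
    by (intro nn_integral_cong) (auto simp: indicator_def)
  also have "\<dots> = (\<integral>\<^sup>+a. F a * indicator {0<..} a \<partial>lborel) + (\<integral>\<^sup>+a. F a * indicator {..0} a \<partial>lborel)"
    by (rule nn_integral_add) auto
  also have "(\<integral>\<^sup>+a. F a * indicator {..0} a \<partial>lborel) = (\<integral>\<^sup>+a. F a * indicator {..0} a \<partial>distr lborel borel uminus)"
    by (simp add: lborel_distr_uminus)
  also have "\<dots> = (\<integral>\<^sup>+a. F (-a) * indicator {0..} a \<partial>lborel)"
    by (subst nn_integral_distr) (auto intro!: nn_integral_cong simp: indicator_def)
  also have "\<dots> = (\<integral>\<^sup>+a. F (-a) * indicator {0<..} a \<partial>lborel)"
    by (intro nn_integral_cong_AE eventually_mono[OF AE_lborel_singleton[of 0]]) (auto simp: indicator_def)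
  also have "(\<integral>\<^sup>+a. F a * indicator {0<..} a \<partial>lborel) + \<dots> = (\<integral>\<^sup>+a. (F a + F (-a)) * indicator {0<..} a \<partial>lborel)"
    by (subst nn_integral_add[symmetric]) (auto simp: distrib_right)
  finally show ?thesis .
qed

lemma L_A1:
  fixes x \<sigma> :: real and h :: "real \<Rightarrow> ennreal"
  assumes \<sigma>: "\<sigma> > 0" and h[measurable]: "h \<in> borel_measurable borel"
  shows "(\<integral>\<^sup>+a. ennreal (normal_density x \<sigma> a) * h (a\<^sup>2) \<partial>lborel) =
         (\<Sum>k. ennreal (poisson_pmf_val (x\<^sup>2/(2*\<sigma>\<^sup>2)) k) *
              (\<integral>\<^sup>+t. ennreal (gd (real k + 1/2) t) * h (2*\<sigma>\<^sup>2*t) \<partial>lborel))"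
proof -
  define c where "c = 1 / (2 * \<sigma>\<^sup>2)"
  have c: "c > 0" using \<sigma> by (simp add: c_def)
  have c2: "2*\<sigma>\<^sup>2*c = 1" using \<sigma> by (simp add: c_def)
  have xc: "x\<^sup>2/(2*\<sigma>\<^sup>2) = x\<^sup>2*c" by (simp add: c_def)
  define w where "w k a = sqrt c / sqrt pi * exp (-(a\<^sup>2+x\<^sup>2)*c) * (2 * (2*c*a*x)^(2*k) / fact (2*k))" for k :: nat and a :: real
  have w_nn: "0 \<le> w k a" for k a
  proof -
    have "0 \<le> (2*c*a*x)^(2*k)" by (simp add: power_mult zero_le_power2 del: power_mult_distrib)
    then show ?thesis unfolding w_def using c by (intro mult_nonneg_nonneg divide_nonneg_pos) auto
  qed
  have w_sums: "(\<lambda>k. w k a) sums (normal_density x \<sigma> a + normal_density x \<sigma> (-a))" for a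
    unfolding phi_sum[OF \<sigma>] c_def[symmetric] w_def
    by (intro sums_mult exp_pm_sums)
  have w_meas[measurable]: "(\<lambda>a. w k a) \<in> borel_measurable borel" for k
    unfolding w_def by measurable
  have "(\<integral>\<^sup>+a. ennreal (normal_density x \<sigma> a) * h (a\<^sup>2) \<partial>lborel) =
        (\<integral>\<^sup>+a. (ennreal (normal_density x \<sigma> a) * h (a\<^sup>2) + ennreal (normal_density x \<sigma> (-a)) * h ((-a)\<^sup>2)) * indicator {0<..} a \<partial>lborel)"
    by (rule reflect) measurable
  also have "\<dots> = (\<integral>\<^sup>+a. (\<Sum>k. ennreal (w k a) * h (a\<^sup>2) * indicator {0<..} a) \<partial>lborel)"
  proof (intro nn_integral_cong)
    fix a :: real
    have "ennreal (normal_density x \<sigma> a) + ennreal (normal_density x \<sigma> (-a)) =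
          ennreal (normal_density x \<sigma> a + normal_density x \<sigma> (-a))"
      by (simp add: ennreal_plus)
    also have "\<dots> = (\<Sum>k. ennreal (w k a))"
      using w_sums[of a] w_nn by (simp add: sums_iff suminf_ennreal2)
    finally have "ennreal (normal_density x \<sigma> a) + ennreal (normal_density x \<sigma> (-a)) = (\<Sum>k. ennreal (w k a))" .
    then show "(ennreal (normal_density x \<sigma> a) * h (a\<^sup>2) + ennreal (normal_density x \<sigma> (-a)) * h ((-a)\<^sup>2)) * indicator {0<..} a =
          (\<Sum>k. ennreal (w k a) * h (a\<^sup>2) * indicator {0<..} a)"
      by (simp add: distrib_right[symmetric])
  qed
  also have "\<dots> = (\<Sum>k. \<integral>\<^sup>+a. ennreal (w k a) * h (a\<^sup>2) * indicator {0<..} a \<partial>lborel)"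
    by (rule nn_integral_suminf) measurable
  also have "\<dots> = (\<Sum>k. ennreal (poisson_pmf_val (x\<^sup>2/(2*\<sigma>\<^sup>2)) k) *
              (\<integral>\<^sup>+t. ennreal (gd (real k + 1/2) t) * h (2*\<sigma>\<^sup>2*t) \<partial>lborel))"
  proof (intro suminf_cong)
    fix k :: nat
    have pn: "0 \<le> poisson_pmf_val (x\<^sup>2*c) k" unfolding poisson_pmf_val_def using c by simp
    have "(\<integral>\<^sup>+t. ennreal (gd (real k + 1/2) t) * h (2*\<sigma>\<^sup>2*t) \<partial>lborel) =
          (\<integral>\<^sup>+t. (ennreal (gd (real k + 1/2) t) * h (2*\<sigma>\<^sup>2*t)) * indicator {0<..} t \<partial>lborel)"
      by (intro nn_integral_cong) (auto simp: gd_def indicator_def)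
    also have "\<dots> = (\<integral>\<^sup>+a. (ennreal (gd (real k + 1/2) (c*a\<^sup>2)) * h (2*\<sigma>\<^sup>2*(c*a\<^sup>2))) * ennreal (2*c*a) * indicator {0<..} a \<partial>lborel)"
      by (rule L_SUB[OF c]) measurable
    finally have eq: "(\<integral>\<^sup>+t. ennreal (gd (real k + 1/2) t) * h (2*\<sigma>\<^sup>2*t) \<partial>lborel) =
           (\<integral>\<^sup>+a. (ennreal (gd (real k + 1/2) (c*a\<^sup>2)) * h (2*\<sigma>\<^sup>2*(c*a\<^sup>2))) * ennreal (2*c*a) * indicator {0<..} a \<partial>lborel)" .
    have "ennreal (poisson_pmf_val (x\<^sup>2*c) k) * (\<integral>\<^sup>+a. (ennreal (gd (real k + 1/2) (c*a\<^sup>2)) * h (2*\<sigma>\<^sup>2*(c*a\<^sup>2))) * ennreal (2*c*a) * indicator {0<..} a \<partial>lborel)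
        = (\<integral>\<^sup>+a. ennreal (poisson_pmf_val (x\<^sup>2*c) k) * ((ennreal (gd (real k + 1/2) (c*a\<^sup>2)) * h (2*\<sigma>\<^sup>2*(c*a\<^sup>2))) * ennreal (2*c*a) * indicator {0<..} a) \<partial>lborel)"
      by (rule nn_integral_cmult[symmetric]) measurable
    also have "\<dots> = (\<integral>\<^sup>+a. ennreal (w k a) * h (a\<^sup>2) * indicator {0<..} a \<partial>lborel)"
    proof (intro nn_integral_cong)
      fix a :: real
      show "ennreal (poisson_pmf_val (x\<^sup>2*c) k) * ((ennreal (gd (real k + 1/2) (c*a\<^sup>2)) * h (2*\<sigma>\<^sup>2*(c*a\<^sup>2))) * ennreal (2*c*a) * indicator {0<..} a)
            = ennreal (w k a) * h (a\<^sup>2) * indicator {0<..} a"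
      proof (cases "a > 0")
        case True
        have gn: "0 \<le> gd (real k + 1/2) (c*a\<^sup>2)" by (rule gd_nonneg) simp
        have e1: "2*\<sigma>\<^sup>2*(c*a\<^sup>2) = a\<^sup>2" using c2 by (simp add: mult.assoc[symmetric])
        have e2: "ennreal (poisson_pmf_val (x\<^sup>2*c) k) * ennreal (gd (real k + 1/2) (c*a\<^sup>2)) * ennreal (2*c*a) = ennreal (w k a)"
          using w_eq[OF c True, of x k] pn gn c True unfolding w_def
          by (simp add: ennreal_mult'[symmetric] ennreal_mult[symmetric])
        have "ennreal (poisson_pmf_val (x\<^sup>2*c) k) * ((ennreal (gd (real k + 1/2) (c*a\<^sup>2)) * h (2*\<sigma>\<^sup>2*(c*a\<^sup>2))) * ennreal (2*c*a) * indicator {0<..} a)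
            = (ennreal (poisson_pmf_val (x\<^sup>2*c) k) * ennreal (gd (real k + 1/2) (c*a\<^sup>2)) * ennreal (2*c*a)) * h (2*\<sigma>\<^sup>2*(c*a\<^sup>2)) * indicator {0<..} a"
          by (simp only: mult_ac)
        also have "\<dots> = ennreal (w k a) * h (a\<^sup>2) * indicator {0<..} a"
          by (simp only: e1 e2)
        finally show ?thesis .
      qed simp
    qed
    finally show "(\<integral>\<^sup>+a. ennreal (w k a) * h (a\<^sup>2) * indicator {0<..} a \<partial>lborel) =
          ennreal (poisson_pmf_val (x\<^sup>2/(2*\<sigma>\<^sup>2)) k) * (\<integral>\<^sup>+t. ennreal (gd (real k + 1/2) t) * h (2*\<sigma>\<^sup>2*t) \<partial>lborel)"
      unfolding eq xc by simp
  qed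
  finally show ?thesis .
qed




lemma suminf_swap_ennreal: "(\<Sum>i. \<Sum>j. f i j :: ennreal) = (\<Sum>j. \<Sum>i. f i j)"
proof -
  have "(\<Sum>i. \<Sum>j. f i j) = (\<Sum>i. \<integral>\<^sup>+j. f i j \<partial>count_space UNIV)"
    by (simp add: nn_integral_count_space_nat)
  also have "\<dots> = (\<integral>\<^sup>+j. (\<Sum>i. f i j) \<partial>count_space UNIV)"
    by (rule nn_integral_suminf[symmetric]) auto
  also have "\<dots> = (\<Sum>j. \<Sum>i. f i j)"
    by (simp add: nn_integral_count_space_nat)
  finally show ?thesis .
qed

lemma pois_conv:
  "(\<Sum>l\<le>n. poisson_pmf_val mx (n - l) * poisson_pmf_val my l) = poisson_pmf_val (mx + my) n"
proof -
  have "(\<Sum>l\<le>n. poisson_pmf_val mx (n - l) * poisson_pmf_val my l) =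
        (\<Sum>l\<le>n. exp (-(mx+my)) / fact n * (of_nat (n choose l) * my ^ l * mx ^ (n - l)))"
  proof (intro sum.cong refl)
    fix l assume "l \<in> {..n}"
    then have ln: "l \<le> n" by simp
    have "real (n choose l) = fact n / (fact l * fact (n - l))"
      using ln by (simp add: binomial_fact)
    then show "poisson_pmf_val mx (n - l) * poisson_pmf_val my l =
          exp (-(mx+my)) / fact n * (of_nat (n choose l) * my ^ l * mx ^ (n - l))"
      unfolding poisson_pmf_val_def by (simp add: exp_add[symmetric] field_simps)
  qed
  also have "\<dots> = exp (-(mx+my)) / fact n * (my + mx) ^ n"
    by (simp add: sum_distrib_left binomial_ring)
  finally show ?thesis by (simp add: poisson_pmf_val_def add.commute)
qed

lemma regroup:
  fixes p q :: "nat \<Rightarrow> real" and E :: "nat \<Rightarrow> ennreal"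
  assumes p: "\<And>k. p k \<ge> 0" and q: "\<And>l. q l \<ge> 0"
  shows "(\<Sum>l. \<Sum>k. ennreal (q l) * (ennreal (p k) * E (k + l))) =
         (\<Sum>n. ennreal (\<Sum>l\<le>n. p (n - l) * q l) * E n)"
proof -
  have "(\<Sum>l. \<Sum>k. ennreal (q l) * (ennreal (p k) * E (k + l))) =
        (\<Sum>l. \<Sum>n. (if l \<le> n then ennreal (p (n - l) * q l) * E n else 0))"
  proof (rule suminf_cong)
    fix l :: nat
    have sm: "strict_mono (\<lambda>k. k + l)" by (auto simp: strict_mono_def)
    have z: "(\<lambda>n. if l \<le> n then ennreal (p (n - l) * q l) * E n else 0) n = 0"
      if "n \<notin> range (\<lambda>k. k + l)" for n
    proof -
      have "\<not> l \<le> n" using that by (metis le_add_diff_inverse2 rangeI)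
      then show ?thesis by simp
    qed
    note suminf_mono_reindex[of "\<lambda>k. k + l" "\<lambda>n. if l \<le> n then ennreal (p (n - l) * q l) * E n else 0", OF sm z]
    then show "(\<Sum>k. ennreal (q l) * (ennreal (p k) * E (k + l))) =
          (\<Sum>n. if l \<le> n then ennreal (p (n - l) * q l) * E n else 0)"
      using p q by (simp add: ennreal_mult mult_ac)
  qed
  also have "\<dots> = (\<Sum>n. \<Sum>l. (if l \<le> n then ennreal (p (n - l) * q l) * E n else 0))"
    by (rule suminf_swap_ennreal)
  also have "\<dots> = (\<Sum>n. ennreal (\<Sum>l\<le>n. p (n - l) * q l) * E n)"
  proof (rule suminf_cong)
    fix n :: nat
    have "(\<Sum>l. (if l \<le> n then ennreal (p (n - l) * q l) * E n else 0)) =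
          (\<Sum>l\<le>n. (if l \<le> n then ennreal (p (n - l) * q l) * E n else 0))"
      by (rule suminf_finite) auto
    also have "\<dots> = (\<Sum>l\<le>n. ennreal (p (n - l) * q l)) * E n"
      by (simp add: sum_distrib_right)
    also have "(\<Sum>l\<le>n. ennreal (p (n - l) * q l)) = ennreal (\<Sum>l\<le>n. p (n - l) * q l)"
      using p q by (simp add: sum_ennreal)
    finally show "(\<Sum>l. (if l \<le> n then ennreal (p (n - l) * q l) * E n else 0)) =
          ennreal (\<Sum>l\<le>n. p (n - l) * q l) * E n" .
  qed
  finally show ?thesis .
qed

lemma gd_erl:
  assumes "u \<noteq> 0"
  shows "gd (real k + 1/2 + (real l + 1/2)) u = erlang_density (k + l) 1 u"
proof -
  have e: "real k + 1/2 + (real l + 1/2) = real (Suc (k + l))" by simp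
  show ?thesis
  proof (cases "u > 0")
    case True
    have G: "Gamma (1 + (real k + real l)) = fact (k + l)"
      using Gamma_fact[of "k+l", where 'a=real] by simp
    have P: "u powr (real k + real l) = u ^ (k + l)"
      using powr_realpow[of u "k+l"] True by simp
    show ?thesis unfolding gd_def erlang_density_def using True G P by (simp add: add_ac)
  next
    case False
    then show ?thesis using assms unfolding gd_def erlang_density_def by simp
  qed
qed

lemma L_C:
  fixes x y \<sigma> :: real and h :: "real \<Rightarrow> ennreal"
  assumes \<sigma>: "\<sigma> > 0" and h[measurable]: "h \<in> borel_measurable borel"
  shows "(\<integral>\<^sup>+a. ennreal (normal_density x \<sigma> a) * (\<integral>\<^sup>+b. ennreal (normal_density y \<sigma> b) * h (a\<^sup>2 + b\<^sup>2) \<partial>lborel) \<partial>lborel) =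
         (\<Sum>n. ennreal (poisson_pmf_val ((x\<^sup>2+y\<^sup>2)/(2*\<sigma>\<^sup>2)) n) * (\<integral>\<^sup>+u. ennreal (erlang_density n 1 u) * h (2*\<sigma>\<^sup>2*u) \<partial>lborel))"
proof -
  define \<tau> where "\<tau> = 2*\<sigma>\<^sup>2"
  define Px where "Px k = poisson_pmf_val (x\<^sup>2/\<tau>) k" for k
  define Py where "Py k = poisson_pmf_val (y\<^sup>2/\<tau>) k" for k
  define g where "g k = gd (real k + 1/2)" for k :: nat
  define E where "E m = (\<integral>\<^sup>+u. ennreal (erlang_density m 1 u) * h (\<tau>*u) \<partial>lborel)" for m
  have tau: "\<tau> > 0" using \<sigma> by (simp add: \<tau>_def)
  have Px_nn: "Px k \<ge> 0" for k unfolding Px_def poisson_pmf_val_def using tau by simp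
  have Py_nn: "Py k \<ge> 0" for k unfolding Py_def poisson_pmf_val_def using tau by simp
  have g_meas[measurable]: "g k \<in> borel_measurable borel" for k unfolding g_def by measurable
  have g_nn: "g k t \<ge> 0" for k t unfolding g_def by (rule gd_nonneg) simp
  have inner: "(\<integral>\<^sup>+b. ennreal (normal_density y \<sigma> b) * h (a\<^sup>2 + b\<^sup>2) \<partial>lborel) =
      (\<Sum>l. ennreal (Py l) * (\<integral>\<^sup>+t. ennreal (g l t) * h (a\<^sup>2 + \<tau>*t) \<partial>lborel))" for a
    using L_A1[OF \<sigma>, of "\<lambda>r. h (a\<^sup>2 + r)" y] unfolding Py_def g_def \<tau>_def by simp
  have inner2: "(\<integral>\<^sup>+a. ennreal (normal_density x \<sigma> a) * h (a\<^sup>2 + \<tau>*t) \<partial>lborel) =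
      (\<Sum>k. ennreal (Px k) * (\<integral>\<^sup>+w. ennreal (g k w) * h (\<tau>*w + \<tau>*t) \<partial>lborel))" for t
    using L_A1[OF \<sigma>, of "\<lambda>r. h (r + \<tau>*t)" x] unfolding Px_def g_def \<tau>_def by simp
  have conv: "(\<integral>\<^sup>+t. ennreal (g l t) * (\<integral>\<^sup>+w. ennreal (g k w) * h (\<tau>*w + \<tau>*t) \<partial>lborel) \<partial>lborel) = E (k + l)" for k l
  proof -
    have "(\<integral>\<^sup>+t. ennreal (g l t) * (\<integral>\<^sup>+w. ennreal (g k w) * h (\<tau>*w + \<tau>*t) \<partial>lborel) \<partial>lborel) =
          (\<integral>\<^sup>+t. (\<integral>\<^sup>+s. ennreal (gd (real l + 1/2) t * gd (real k + 1/2) s) * (\<lambda>u. h (\<tau>*u)) (t + s) \<partial>lborel) \<partial>lborel)"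
      by (intro nn_integral_cong, subst nn_integral_cmult[symmetric])
         (auto simp: g_def ennreal_mult'[symmetric] gd_nonneg mult_ac algebra_simps intro!: nn_integral_cong)
    also have "\<dots> = (\<integral>\<^sup>+u. ennreal (gd (real l + 1/2 + (real k + 1/2)) u) * h (\<tau>*u) \<partial>lborel)"
      by (rule L_B) auto
    also have "\<dots> = E (k + l)"
      unfolding E_def
    proof (intro nn_integral_cong_AE eventually_mono[OF AE_lborel_singleton[of 0]] impI)
      fix u :: real assume "u \<noteq> 0"
      from gd_erl[OF this, of l k]
      show "ennreal (gd (real l + 1/2 + (real k + 1/2)) u) * h (\<tau>*u) = ennreal (erlang_density (k + l) 1 u) * h (\<tau>*u)"
        by (simp only: add.commute[of l k])
    qed
    finally show ?thesis .
  qed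
  have "(\<integral>\<^sup>+a. ennreal (normal_density x \<sigma> a) * (\<integral>\<^sup>+b. ennreal (normal_density y \<sigma> b) * h (a\<^sup>2 + b\<^sup>2) \<partial>lborel) \<partial>lborel) =
        (\<integral>\<^sup>+a. (\<Sum>l. ennreal (Py l) * (ennreal (normal_density x \<sigma> a) * (\<integral>\<^sup>+t. ennreal (g l t) * h (a\<^sup>2 + \<tau>*t) \<partial>lborel))) \<partial>lborel)"
    unfolding inner ennreal_suminf_cmult[symmetric] by (simp only: mult_ac)
  also have "\<dots> = (\<Sum>l. \<integral>\<^sup>+a. ennreal (Py l) * (ennreal (normal_density x \<sigma> a) * (\<integral>\<^sup>+t. ennreal (g l t) * h (a\<^sup>2 + \<tau>*t) \<partial>lborel)) \<partial>lborel)"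
    by (rule nn_integral_suminf) measurable
  also have "\<dots> = (\<Sum>l. ennreal (Py l) * (\<integral>\<^sup>+a. \<integral>\<^sup>+t. ennreal (normal_density x \<sigma> a) * (ennreal (g l t) * h (a\<^sup>2 + \<tau>*t)) \<partial>lborel \<partial>lborel))"
    by (intro suminf_cong, subst nn_integral_cmult) (auto intro!: nn_integral_cong simp: nn_integral_cmult[symmetric])
  also have "\<dots> = (\<Sum>l. ennreal (Py l) * (\<integral>\<^sup>+t. \<integral>\<^sup>+a. ennreal (normal_density x \<sigma> a) * (ennreal (g l t) * h (a\<^sup>2 + \<tau>*t)) \<partial>lborel \<partial>lborel))"
    by (intro suminf_cong arg_cong2[where f="(*)"] refl lborel_pair.Fubini') measurable
  also have "\<dots> = (\<Sum>l. ennreal (Py l) * (\<integral>\<^sup>+t. ennreal (g l t) * (\<integral>\<^sup>+a. ennreal (normal_density x \<sigma> a) * h (a\<^sup>2 + \<tau>*t) \<partial>lborel) \<partial>lborel))"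
    by (intro suminf_cong arg_cong2[where f="(*)"] refl nn_integral_cong)
       (auto simp: nn_integral_cmult[symmetric] mult_ac intro!: nn_integral_cong)
  also have "\<dots> = (\<Sum>l. ennreal (Py l) * (\<integral>\<^sup>+t. (\<Sum>k. ennreal (Px k) * (ennreal (g l t) * (\<integral>\<^sup>+w. ennreal (g k w) * h (\<tau>*w + \<tau>*t) \<partial>lborel))) \<partial>lborel))"
    unfolding inner2 ennreal_suminf_cmult[symmetric] by (simp only: mult_ac)
  also have "\<dots> = (\<Sum>l. ennreal (Py l) * (\<Sum>k. \<integral>\<^sup>+t. ennreal (Px k) * (ennreal (g l t) * (\<integral>\<^sup>+w. ennreal (g k w) * h (\<tau>*w + \<tau>*t) \<partial>lborel)) \<partial>lborel))"
    by (intro suminf_cong arg_cong2[where f="(*)"] refl nn_integral_suminf) measurable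
  also have "\<dots> = (\<Sum>l. ennreal (Py l) * (\<Sum>k. ennreal (Px k) * E (k + l)))"
    by (intro suminf_cong arg_cong2[where f="(*)"] refl)
       (simp add: nn_integral_cmult conv[symmetric])
  also have "\<dots> = (\<Sum>l. \<Sum>k. ennreal (Py l) * (ennreal (Px k) * E (k + l)))"
    by simp
  also have "\<dots> = (\<Sum>n. ennreal (\<Sum>l\<le>n. Px (n - l) * Py l) * E n)"
    by (rule regroup) (auto simp: Px_nn Py_nn)
  also have "\<dots> = (\<Sum>n. ennreal (poisson_pmf_val ((x\<^sup>2+y\<^sup>2)/(2*\<sigma>\<^sup>2)) n) * (\<integral>\<^sup>+u. ennreal (erlang_density n 1 u) * h (2*\<sigma>\<^sup>2*u) \<partial>lborel))"
    unfolding Px_def Py_def pois_conv E_def \<tau>_def by (simp add: add_divide_distrib)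
  finally show ?thesis .
qed



lemma erlang_CDF_series:
  assumes s: "s \<ge> 0"
  shows "(\<lambda>n. s^(n + Suc j) * exp (- s) / fact (n + Suc j)) sums erlang_CDF j 1 s"
proof -
  have "(\<lambda>n. s^(n + Suc j) / fact (n + Suc j)) sums (exp s - (\<Sum>m<Suc j. s^m / fact m))"
    using exp_converges[of s] sums_iff_shift[of "\<lambda>m. s^m / fact m" "Suc j" "exp s - (\<Sum>m<Suc j. s^m / fact m)"]
    by (simp add: field_simps)
  then have "(\<lambda>n. exp (- s) * (s^(n + Suc j) / fact (n + Suc j))) sums (exp (- s) * (exp s - (\<Sum>m<Suc j. s^m / fact m)))"
    by (rule sums_mult)
  moreover have "exp (- s) * (exp s - (\<Sum>m<Suc j. s^m / fact m)) = erlang_CDF j 1 s"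
    using s by (simp add: erlang_CDF_def right_diff_distrib sum_distrib_left exp_minus field_simps lessThan_Suc_atMost)
  ultimately show ?thesis by (simp add: mult_ac)
qed

lemma erlang_prod:
  "erlang_density i 1 s * (s^m * exp (- s) / fact m) =
   erlang_density (i + m) 2 s * (fact (i + m) / (fact i * fact m * 2^(i+m+1)))"
proof (cases "s < 0")
  case False
  have "exp (- s) * exp (- s) = exp (- (2 * s))" by (simp add: exp_add[symmetric])
  then show ?thesis using False unfolding erlang_density_def
    by (simp add: field_simps power_add)
qed (simp add: erlang_density_def)

lemma L_D:
  "(\<integral>\<^sup>+s. ennreal (erlang_density i 1 s) * (\<integral>\<^sup>+u. ennreal (erlang_density j 1 u) * indicator {..<s} u \<partial>lborel) \<partial>lborel)
   = (\<Sum>n. ennreal (real ((i+j+1+n) choose i) / 2^(i+j+2+n)))"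
proof -
  have cdf: "(\<integral>\<^sup>+u. ennreal (erlang_density j 1 u) * indicator {..<s} u \<partial>lborel) = ennreal (erlang_CDF j 1 s)" for s
  proof -
    have "(\<integral>\<^sup>+u. ennreal (erlang_density j 1 u) * indicator {..<s} u \<partial>lborel) =
          (\<integral>\<^sup>+u. ennreal (erlang_density j 1 u) * indicator {..s} u \<partial>lborel)"
      by (intro nn_integral_cong_AE eventually_mono[OF AE_lborel_singleton[of s]]) (auto simp: indicator_def)
    also have "\<dots> = ennreal (erlang_CDF j 1 s)" by (rule nn_integral_erlang_density) simp
    finally show ?thesis .
  qed
  have "(\<integral>\<^sup>+s. ennreal (erlang_density i 1 s) * (\<integral>\<^sup>+u. ennreal (erlang_density j 1 u) * indicator {..<s} u \<partial>lborel) \<partial>lborel)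
      = (\<integral>\<^sup>+s. (\<Sum>n. ennreal (erlang_density i 1 s * (s^(n + Suc j) * exp (- s) / fact (n + Suc j)))) \<partial>lborel)"
  proof (intro nn_integral_cong)
    fix s :: real
    show "ennreal (erlang_density i 1 s) * (\<integral>\<^sup>+u. ennreal (erlang_density j 1 u) * indicator {..<s} u \<partial>lborel) =
          (\<Sum>n. ennreal (erlang_density i 1 s * (s^(n + Suc j) * exp (- s) / fact (n + Suc j))))"
    proof (cases "s < 0")
      case True
      then show ?thesis by (simp add: erlang_density_def)
    next
      case False
      then have s: "s \<ge> 0" by simp
      have "(\<Sum>n. ennreal (erlang_density i 1 s * (s^(n + Suc j) * exp (- s) / fact (n + Suc j)))) =
            ennreal (\<Sum>n. erlang_density i 1 s * (s^(n + Suc j) * exp (- s) / fact (n + Suc j)))"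
        using s sums_summable[OF sums_mult[OF erlang_CDF_series[OF s], of "erlang_density i 1 s"]]
        by (intro suminf_ennreal2) auto
      also have "(\<Sum>n. erlang_density i 1 s * (s^(n + Suc j) * exp (- s) / fact (n + Suc j))) = erlang_density i 1 s * erlang_CDF j 1 s"
        using sums_unique[OF sums_mult[OF erlang_CDF_series[OF s], of "erlang_density i 1 s"]] by (simp add: mult_ac)
      finally show ?thesis unfolding cdf using s
        by (simp add: ennreal_mult' erlang_CDF_nonneg)
    qed
  qed
  also have "\<dots> = (\<Sum>n. \<integral>\<^sup>+s. ennreal (erlang_density i 1 s * (s^(n + Suc j) * exp (- s) / fact (n + Suc j))) \<partial>lborel)"
    by (rule nn_integral_suminf) measurable
  also have "\<dots> = (\<Sum>n. ennreal (real ((i+j+1+n) choose i) / 2^(i+j+2+n)))"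
  proof (rule suminf_cong)
    fix n :: nat
    define m where "m = n + Suc j"
    have "(\<integral>\<^sup>+s. ennreal (erlang_density i 1 s * (s^m * exp (- s) / fact m)) \<partial>lborel) =
          (\<integral>\<^sup>+s. ennreal (fact (i + m) / (fact i * fact m * 2^(i+m+1))) * ennreal (erlang_density (i + m) 2 s * s^0) \<partial>lborel)"
    proof (intro nn_integral_cong)
      fix s :: real
      have eqs: "erlang_density i 1 s * (s^m * exp (- s) / fact m) =
            (fact (i + m) / (fact i * fact m * 2^(i+m+1))) * (erlang_density (i + m) 2 s * s^0)"
        unfolding erlang_prod by simp
      show "ennreal (erlang_density i 1 s * (s^m * exp (- s) / fact m)) =
            ennreal (fact (i + m) / (fact i * fact m * 2^(i+m+1))) * ennreal (erlang_density (i + m) 2 s * s^0)"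
      proof -
        have nn: "0 \<le> fact (i + m) / (fact i * fact m * 2^(i+m+1) :: real)" by simp
        show ?thesis unfolding ennreal_mult'[OF nn, symmetric] using eqs by simp
      qed
    qed
    also have "\<dots> = ennreal (fact (i + m) / (fact i * fact m * 2^(i+m+1)))"
      using nn_integral_erlang_ith_moment[of 2 "i + m" 0]
      by (subst nn_integral_cmult) auto
    also have "fact (i + m) / (fact i * fact m * 2^(i+m+1)) = real ((i+j+1+n) choose i) / 2^(i+j+2+n)"
    proof -
      have binom: "real ((i + m) choose i) = fact (i + m) / (fact i * fact m)"
        by (simp add: binomial_fact)
      have N1: "i+j+1+n = i + m" and N2: "i+j+2+n = i+m+1" by (simp_all add: m_def)
      show ?thesis unfolding N1 N2 binom by (simp add: divide_divide_eq_left)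
    qed
    finally show "(\<integral>\<^sup>+s. ennreal (erlang_density i 1 s * (s^(n + Suc j) * exp (- s) / fact (n + Suc j))) \<partial>lborel) =
          ennreal (real ((i+j+1+n) choose i) / 2^(i+j+2+n))" unfolding m_def .
  qed
  finally show ?thesis .
qed



lemma M0:
  fixes M :: "'a measure"
    and x1 y1 x2 y2 \<sigma> :: real
    and X1 Y1 X2 Y2 :: "'a \<Rightarrow> real"
  assumes "prob_space M"
    and \<sigma>: "\<sigma> > 0"
    and d1: "distributed M lborel X1 (normal_density x1 \<sigma>)"
    and d2: "distributed M lborel Y1 (normal_density y1 \<sigma>)"
    and d3: "distributed M lborel X2 (normal_density x2 \<sigma>)"
    and d4: "distributed M lborel Y2 (normal_density y2 \<sigma>)"
    and ind: "prob_space.indep_vars M (\<lambda>_. borel) (\<lambda>i. [X1, Y1, X2, Y2] ! i) {0..<4}"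
  shows "emeasure M {\<omega> \<in> space M. sqrt ((X1 \<omega>)^2 + (Y1 \<omega>)^2) > sqrt ((X2 \<omega>)^2 + (Y2 \<omega>)^2)} =
    (\<integral>\<^sup>+a. ennreal (normal_density x1 \<sigma> a) * (\<integral>\<^sup>+b. ennreal (normal_density y1 \<sigma> b) *
      (\<integral>\<^sup>+c. ennreal (normal_density x2 \<sigma> c) * (\<integral>\<^sup>+e. ennreal (normal_density y2 \<sigma> e) *
        indicator {..<a\<^sup>2+b\<^sup>2} (c\<^sup>2+e\<^sup>2) \<partial>lborel) \<partial>lborel) \<partial>lborel) \<partial>lborel)"
proof -
  interpret prob_space M by fact
  define Xs where "Xs = (\<lambda>i. [X1, Y1, X2, Y2] ! i)"
  define ms where "ms = [x1, y1, x2, y2]"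
  define D where "D i = density lborel (\<lambda>x. ennreal (normal_density (ms ! i) \<sigma> x))" for i :: nat
  define I where "I = {0..<4::nat}"
  have I: "I = insert 0 (insert 1 (insert 2 {3}))" by (auto simp: I_def)
  have distX: "distributed M lborel (Xs i) (\<lambda>x. ennreal (normal_density (ms ! i) \<sigma> x))" if "i \<in> I" for i
  proof -
    have "i = 0 \<or> i = 1 \<or> i = 2 \<or> i = 3" using that by (auto simp: I_def)
    then show ?thesis using d1 d2 d3 d4 by (auto simp: Xs_def ms_def)
  qed
  have rv: "random_variable borel (Xs i)" if "i \<in> I" for i
    using distributed_measurable[OF distX[OF that]] by simp
  have distr_eq: "distr M borel (Xs i) = D i" if "i \<in> I" for i
  proof -
    have "distr M borel (Xs i) = distr M lborel (Xs i)" by (rule distr_cong) auto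
    also have "\<dots> = D i" using distX[OF that] unfolding distributed_def D_def by simp
    finally show ?thesis .
  qed
  have Dp: "prob_space (D i)" for i unfolding D_def using prob_space_normal_density[OF \<sigma>] by simp
  interpret D: product_prob_space D
    by (rule product_prob_spaceI) (rule Dp)
  have joint: "distr M (\<Pi>\<^sub>M i\<in>I. borel) (\<lambda>x. \<lambda>i\<in>I. Xs i x) = (\<Pi>\<^sub>M i\<in>I. D i)"
  proof -
    have "distr M (\<Pi>\<^sub>M i\<in>I. borel) (\<lambda>x. \<lambda>i\<in>I. Xs i x) = (\<Pi>\<^sub>M i\<in>I. distr M borel (Xs i))"
      using ind rv unfolding Xs_def[symmetric] I_def[symmetric]
      by (subst indep_vars_iff_distr_eq_PiM'[symmetric]) (auto simp: I_def)
    also have "\<dots> = (\<Pi>\<^sub>M i\<in>I. D i)" by (rule PiM_cong) (auto simp: distr_eq)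
    finally show ?thesis .
  qed
  have Dsets[simp, measurable_cong]: "sets (D i) = sets borel" for i by (simp add: D_def)
  define H where "H a b c e = (if c\<^sup>2+e\<^sup>2 < a\<^sup>2+b\<^sup>2 then 1 else 0 :: ennreal)" for a b c e :: real
  define S where "S = {f \<in> space (\<Pi>\<^sub>M i\<in>I. (borel :: real measure)). (f 2)^2 + (f 3)^2 < (f 0)^2 + (f 1)^2}"
  have S_sets: "S \<in> sets (\<Pi>\<^sub>M i\<in>I. (borel :: real measure))"
    unfolding S_def I_def by measurable
  have Fmeas: "(\<lambda>x. \<lambda>i\<in>I. Xs i x) \<in> measurable M (\<Pi>\<^sub>M i\<in>I. borel)"
    using rv by (intro measurable_restrict) auto
  have "emeasure M {\<omega> \<in> space M. sqrt ((X1 \<omega>)^2 + (Y1 \<omega>)^2) > sqrt ((X2 \<omega>)^2 + (Y2 \<omega>)^2)} =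
        emeasure M ((\<lambda>x. \<lambda>i\<in>I. Xs i x) -` S \<inter> space M)"
    using rv by (intro arg_cong[where f="emeasure M"]) (auto simp: S_def I_def Xs_def space_PiM measurable_space)
  also have "\<dots> = emeasure (distr M (\<Pi>\<^sub>M i\<in>I. borel) (\<lambda>x. \<lambda>i\<in>I. Xs i x)) S"
    by (rule emeasure_distr[symmetric, OF Fmeas S_sets])
  also have "\<dots> = emeasure (\<Pi>\<^sub>M i\<in>I. D i) S" unfolding joint ..
  also have "\<dots> = (\<integral>\<^sup>+f. indicator S f \<partial>(\<Pi>\<^sub>M i\<in>I. D i))"
  proof -
    have "sets (\<Pi>\<^sub>M i\<in>I. D i) = sets (\<Pi>\<^sub>M i\<in>I. (borel :: real measure))"
      by (rule sets_PiM_cong) (auto simp: D_def)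
    then show ?thesis using S_sets by simp
  qed
  also have "\<dots> = (\<integral>\<^sup>+f. H (f 0) (f 1) (f 2) (f 3) \<partial>(\<Pi>\<^sub>M i\<in>I. D i))"
  proof (rule nn_integral_cong)
    fix f assume "f \<in> space (\<Pi>\<^sub>M i\<in>I. D i)"
    moreover have "space (\<Pi>\<^sub>M i\<in>I. D i) = space (\<Pi>\<^sub>M i\<in>I. (borel :: real measure))"
      by (rule sets_eq_imp_space_eq, rule sets_PiM_cong) (auto simp: D_def)
    ultimately show "indicator S f = H (f 0) (f 1) (f 2) (f 3)"
      by (auto simp: S_def H_def indicator_def)
  qed
  also have "\<dots> = (\<integral>\<^sup>+a. \<integral>\<^sup>+f. H a (f 1) (f 2) (f 3) \<partial>(\<Pi>\<^sub>M i\<in>{1,2,3}. D i) \<partial>D 0)"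
  proof -
    have m: "(\<lambda>f. H (f 0) (f 1) (f 2) (f 3)) \<in> borel_measurable (\<Pi>\<^sub>M i\<in>insert 0 {1,2,3}. D i)"
      unfolding H_def by measurable
    show ?thesis
      unfolding I using D.product_nn_integral_insert_rev[of "{1,2,3}" 0 "\<lambda>f. H (f 0) (f 1) (f 2) (f 3)", OF _ _ m]
      unfolding H_def by simp
  qed
  also have "\<dots> = (\<integral>\<^sup>+a. \<integral>\<^sup>+b. \<integral>\<^sup>+f. H a b (f 2) (f 3) \<partial>(\<Pi>\<^sub>M i\<in>{2,3}. D i) \<partial>D 1 \<partial>D 0)"
  proof (rule nn_integral_cong)
    fix a show "(\<integral>\<^sup>+f. H a (f 1) (f 2) (f 3) \<partial>(\<Pi>\<^sub>M i\<in>{1,2,3}. D i)) =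
       (\<integral>\<^sup>+b. \<integral>\<^sup>+f. H a b (f 2) (f 3) \<partial>(\<Pi>\<^sub>M i\<in>{2,3}. D i) \<partial>D 1)"
    proof -
      have m: "(\<lambda>f. H a (f 1) (f 2) (f 3)) \<in> borel_measurable (\<Pi>\<^sub>M i\<in>insert 1 {2,3}. D i)"
        unfolding H_def by measurable
      show ?thesis
        using D.product_nn_integral_insert_rev[of "{2,3}" 1 "\<lambda>f. H a (f 1) (f 2) (f 3)", OF _ _ m]
        unfolding H_def by simp
    qed
  qed
  also have "\<dots> = (\<integral>\<^sup>+a. \<integral>\<^sup>+b. \<integral>\<^sup>+c. \<integral>\<^sup>+e. H a b c e \<partial>D 3 \<partial>D 2 \<partial>D 1 \<partial>D 0)"
  proof (intro nn_integral_cong)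
    fix a b show "(\<integral>\<^sup>+f. H a b (f 2) (f 3) \<partial>(\<Pi>\<^sub>M i\<in>{2,3}. D i)) =
       (\<integral>\<^sup>+c. \<integral>\<^sup>+e. H a b c e \<partial>D 3 \<partial>D 2)"
    proof -
      have m: "(\<lambda>f. H a b (f 2) (f 3)) \<in> borel_measurable (\<Pi>\<^sub>M i\<in>insert 2 {3}. D i)"
        unfolding H_def by measurable
      have m2: "(\<lambda>e. H a b c e) \<in> borel_measurable (D 3)" for c
        unfolding H_def by measurable
      have "(\<integral>\<^sup>+f. H a b (f 2) (f 3) \<partial>(\<Pi>\<^sub>M i\<in>{2,3}. D i)) =
          (\<integral>\<^sup>+c. \<integral>\<^sup>+f. H a b c (f 3) \<partial>(\<Pi>\<^sub>M i\<in>{3}. D i) \<partial>D 2)"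
        using D.product_nn_integral_insert_rev[of "{3}" 2 "\<lambda>f. H a b (f 2) (f 3)", OF _ _ m]
        by simp
      also have "\<dots> = (\<integral>\<^sup>+c. \<integral>\<^sup>+e. H a b c e \<partial>D 3 \<partial>D 2)"
        by (intro nn_integral_cong D.product_nn_integral_singleton m2)
      finally show ?thesis .
    qed
  qed
  also have "\<dots> = (\<integral>\<^sup>+a. ennreal (normal_density x1 \<sigma> a) * (\<integral>\<^sup>+b. ennreal (normal_density y1 \<sigma> b) *
      (\<integral>\<^sup>+c. ennreal (normal_density x2 \<sigma> c) * (\<integral>\<^sup>+e. ennreal (normal_density y2 \<sigma> e) *
        H a b c e \<partial>lborel) \<partial>lborel) \<partial>lborel) \<partial>lborel)"
    unfolding D_def ms_def H_def
    by (simp add: nn_integral_density)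
  finally show ?thesis unfolding H_def by (simp add: indicator_def of_bool_def)
qed




lemma poch_nat: "pochhammer (real (Suc k)) n = fact (k + n) / fact k"
proof -
  have "pochhammer (1::real) (k + n) = pochhammer 1 k * pochhammer (1 + real k) n"
    by (simp add: pochhammer_product')
  then have "fact (k + n) = fact k * pochhammer (real (Suc k)) n"
    by (simp add: pochhammer_fact add.commute)
  then show ?thesis by (simp add: field_simps)
qed

lemma T_term:
  "(1/2::real)^((i+1)+(j+1)) * real (((i+1)+(j+1)-1) choose (j+1)) *
     (pochhammer 1 n * pochhammer (real ((i+1)+(j+1))) n / (pochhammer (real ((j+1)+1)) n * fact n) * (1/2)^n)
   = real ((i+j+1+n) choose i) / 2^(i+j+2+n)"
proof -
  have p1: "pochhammer (1::real) n = fact n" by (simp add: pochhammer_fact)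
  have p2: "pochhammer (real ((i+1)+(j+1))) n = fact (i+j+1+n) / fact (i+j+1)"
    using poch_nat[of "i+j+1" n] by (simp add: add_ac)
  have p3: "pochhammer (real ((j+1)+1)) n = fact (j+1+n) / fact (j+1)"
    using poch_nat[of "j+1" n] by (simp add: add_ac)
  have c1: "real (((i+1)+(j+1)-1) choose (j+1)) = fact (i+j+1) / (fact (j+1) * fact i)"
  proof -
    have "((i+1)+(j+1)-1) = i+j+1" by simp
    moreover have "real ((i+j+1) choose (j+1)) = fact (i+j+1) / (fact (j+1) * fact (i+j+1-(j+1)))"
      by (rule binomial_fact) simp
    ultimately show ?thesis by simp
  qed
  have c2: "real ((i+j+1+n) choose i) = fact (i+j+1+n) / (fact i * fact (j+1+n))"
  proof -
    have "real ((i+j+1+n) choose i) = fact (i+j+1+n) / (fact i * fact (i+j+1+n-i))"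
      by (rule binomial_fact) simp
    moreover have "i+j+1+n-i = j+1+n" by simp
    ultimately show ?thesis by simp
  qed
  have e: "(1/2::real)^((i+1)+(j+1)) * (1/2)^n = 1 / 2^(i+j+2+n)"
    by (simp add: power_add[symmetric] power_one_over add_ac)
  have F: "fact (i+j+1) > (0::real)" "fact (j+1) > (0::real)" "fact (j+1+n) > (0::real)" "fact i > (0::real)" "fact n > (0::real)"
    by simp_all
  have gen: "c * (A / (B * I)) * (N * (Fx / A) / (G / B * N) * d) = Fx / (I * G) * (c * d)"
    if "A \<noteq> 0" "B \<noteq> 0" "I \<noteq> 0" "G \<noteq> 0" "N \<noteq> 0" for c A B I N Fx G d :: real
    using that by (simp add: field_simps)
  show ?thesis unfolding p1 p2 p3 c1 c2
    by (subst gen) (use F in \<open>simp_all only: less_irrefl not_False_eq_True e\<close>, simp)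
qed

lemma T_hyp:
  assumes sT: "summable (\<lambda>n. real ((i+j+1+n) choose i) / 2^(i+j+2+n))"
  shows "(\<Sum>n. real ((i+j+1+n) choose i) / 2^(i+j+2+n)) =
         (1/2) ^ ((i+1) + (j+1)) * real (((i+1) + (j+1) - 1) choose (j+1))
                  * hyp2F1 1 (real ((i+1) + (j+1))) (real ((j+1) + 1)) (1/2)"
proof -
  define c where "c = (1/2::real) ^ ((i+1) + (j+1)) * real (((i+1) + (j+1) - 1) choose (j+1))"
  define h where "h n = pochhammer 1 n * pochhammer (real ((i+1)+(j+1))) n / (pochhammer (real ((j+1)+1)) n * fact n) * (1/2::real)^n" for n
  have "0 < ((i+j+1) choose (j+1))" by (rule zero_less_binomial) simp
  moreover have "(i+1) + (j+1) - 1 = i+j+1" by simp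
  ultimately have c: "c > 0" unfolding c_def by (simp del: binomial_Suc_Suc add: Suc_eq_plus1[symmetric])
  have Th: "real ((i+j+1+n) choose i) / 2^(i+j+2+n) = c * h n" for n
    unfolding c_def h_def using T_term[of i j n] by (simp add: mult.assoc)
  have "summable (\<lambda>n. (c * h n) / c)" using sT unfolding Th by (rule summable_divide)
  then have sh: "summable h" using c by simp
  have "(\<Sum>n. real ((i+j+1+n) choose i) / 2^(i+j+2+n)) = (\<Sum>n. c * h n)" unfolding Th ..
  also have "\<dots> = c * (\<Sum>n. h n)" by (rule suminf_mult[OF sh])
  also have "(\<Sum>n. h n) = hyp2F1 1 (real ((i+1) + (j+1))) (real ((j+1) + 1)) (1/2)"
    unfolding hyp2F1_def h_def ..
  finally show ?thesis unfolding c_def .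
qed

lemma erl_cdf:
  "(\<integral>\<^sup>+u. ennreal (erlang_density j 1 u) * indicator {..<s} u \<partial>lborel) = ennreal (erlang_CDF j 1 s)"
proof -
  have "(\<integral>\<^sup>+u. ennreal (erlang_density j 1 u) * indicator {..<s} u \<partial>lborel) =
        (\<integral>\<^sup>+u. ennreal (erlang_density j 1 u) * indicator {..s} u \<partial>lborel)"
    by (intro nn_integral_cong_AE eventually_mono[OF AE_lborel_singleton[of s]]) (auto simp: indicator_def)
  also have "\<dots> = ennreal (erlang_CDF j 1 s)" by (rule nn_integral_erlang_density) simp
  finally show ?thesis .
qed

lemma L_D2:
  "(\<integral>\<^sup>+s. ennreal (erlang_density i 1 s) * ennreal (erlang_CDF j 1 s) \<partial>lborel)
   = (\<Sum>n. ennreal (real ((i+j+1+n) choose i) / 2^(i+j+2+n)))"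
  using L_D[of i j] unfolding erl_cdf .

lemma erlang_CDF_le1: "erlang_CDF j 1 s \<le> 1"
  unfolding erlang_CDF_def by (auto intro!: sum_nonneg)

lemma L_D_bound: "(\<Sum>n. ennreal (real ((i+j+1+n) choose i) / 2^(i+j+2+n))) \<le> 1"
proof -
  have "(\<Sum>n. ennreal (real ((i+j+1+n) choose i) / 2^(i+j+2+n))) =
        (\<integral>\<^sup>+s. ennreal (erlang_density i 1 s) * ennreal (erlang_CDF j 1 s) \<partial>lborel)"
    using L_D2 by simp
  also have "\<dots> \<le> (\<integral>\<^sup>+s. ennreal (erlang_density i 1 s * s^0) \<partial>lborel)"
    by (intro nn_integral_mono) (auto intro!: mult_left_le erlang_CDF_le1)
  also have "\<dots> = 1" using nn_integral_erlang_ith_moment[of 1 i 0] by simp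
  finally show ?thesis .
qed

lemma pois_sums: "\<mu> \<ge> 0 \<Longrightarrow> (\<lambda>j. poisson_pmf_val \<mu> j) sums 1"
proof -
  assume "\<mu> \<ge> 0"
  have "(\<lambda>j. exp (- \<mu>) * (\<mu>^j / fact j)) sums (exp (- \<mu>) * exp \<mu>)"
    by (intro sums_mult) (use exp_converges[of \<mu>] in \<open>simp add: field_simps\<close>)
  then show ?thesis by (simp add: poisson_pmf_val_def exp_minus field_simps)
qed

theorem lemma1:
  fixes M :: "'a measure"
    and x1 y1 x2 y2 \<sigma> :: real
    and X1 Y1 X2 Y2 :: "'a \<Rightarrow> real"
  assumes "prob_space M"
    and "\<sigma> > 0"
    and "sqrt (x1^2 + y1^2) < sqrt (x2^2 + y2^2)"
    and "distributed M lborel X1 (normal_density x1 \<sigma>)"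
    and "distributed M lborel Y1 (normal_density y1 \<sigma>)"
    and "distributed M lborel X2 (normal_density x2 \<sigma>)"
    and "distributed M lborel Y2 (normal_density y2 \<sigma>)"
    and "prob_space.indep_vars M (\<lambda>_. borel) (\<lambda>i. [X1, Y1, X2, Y2] ! i) {0..<4}"
  shows "measure M {\<omega> \<in> space M.
            sqrt ((X1 \<omega>)^2 + (Y1 \<omega>)^2) > sqrt ((X2 \<omega>)^2 + (Y2 \<omega>)^2)}
       = (let \<beta> = 1 / (2 * \<sigma>^2);
              lam1 = (sqrt (x1^2 + y1^2))^2;
              lam2 = (sqrt (x2^2 + y2^2))^2
          in (\<Sum>i. \<Sum>j. poisson_pmf_val (lam1 * \<beta>) i * poisson_pmf_val (lam2 * \<beta>) j *
                 ((1/2) ^ ((i+1) + (j+1)) * real (((i+1) + (j+1) - 1) choose (j+1))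
                  * hyp2F1 1 (real ((i+1) + (j+1))) (real ((j+1) + 1)) (1/2))))"
proof -
  interpret prob_space M by fact
  note \<sigma> = \<open>\<sigma> > 0\<close>
  define \<mu>1 where "\<mu>1 = (x1\<^sup>2+y1\<^sup>2)/(2*\<sigma>\<^sup>2)"
  define \<mu>2 where "\<mu>2 = (x2\<^sup>2+y2\<^sup>2)/(2*\<sigma>\<^sup>2)"
  have mu_nn: "\<mu>1 \<ge> 0" "\<mu>2 \<ge> 0" unfolding \<mu>1_def \<mu>2_def by simp_all
  define P1 where "P1 i = poisson_pmf_val \<mu>1 i" for i
  define P2 where "P2 i = poisson_pmf_val \<mu>2 i" for i
  have P_nn: "P1 i \<ge> 0" "P2 i \<ge> 0" for i unfolding P1_def P2_def poisson_pmf_val_def using mu_nn by simp_all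
  define T where "T i j n = real ((i+j+1+n) choose i) / 2^(i+j+2+n)" for i j n :: nat
  have T_nn: "T i j n \<ge> 0" for i j n unfolding T_def by simp
  define G where "G r = (\<Sum>j. ennreal (P2 j) * ennreal (erlang_CDF j 1 (r / (2*\<sigma>\<^sup>2))))" for r
  have G_meas[measurable]: "G \<in> borel_measurable borel"
    unfolding G_def erlang_CDF_def by measurable
  have G_eq: "(\<integral>\<^sup>+c. ennreal (normal_density x2 \<sigma> c) * (\<integral>\<^sup>+e. ennreal (normal_density y2 \<sigma> e) *
        indicator {..<r} (c\<^sup>2+e\<^sup>2) \<partial>lborel) \<partial>lborel) = G r" for r
  proof -
    have "(\<integral>\<^sup>+c. ennreal (normal_density x2 \<sigma> c) * (\<integral>\<^sup>+e. ennreal (normal_density y2 \<sigma> e) *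
        indicator {..<r} (c\<^sup>2+e\<^sup>2) \<partial>lborel) \<partial>lborel) =
        (\<Sum>n. ennreal (P2 n) * (\<integral>\<^sup>+u. ennreal (erlang_density n 1 u) * indicator {..<r} (2*\<sigma>\<^sup>2*u) \<partial>lborel))"
      using L_C[OF \<sigma>, of "indicator {..<r}" x2 y2] unfolding P2_def \<mu>2_def by simp
    also have "\<dots> = G r"
    proof -
      have ii: "indicator {..<r} (2*\<sigma>\<^sup>2*u) = (indicator {..<r / (2*\<sigma>\<^sup>2)} u :: ennreal)" for u
        using \<sigma> by (auto simp: indicator_def field_simps)
      show ?thesis unfolding G_def ii erl_cdf ..
    qed
    finally show ?thesis .
  qed
  have "emeasure M {\<omega> \<in> space M. sqrt ((X1 \<omega>)^2 + (Y1 \<omega>)^2) > sqrt ((X2 \<omega>)^2 + (Y2 \<omega>)^2)} =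
    (\<integral>\<^sup>+a. ennreal (normal_density x1 \<sigma> a) * (\<integral>\<^sup>+b. ennreal (normal_density y1 \<sigma> b) * G (a\<^sup>2+b\<^sup>2) \<partial>lborel) \<partial>lborel)"
    using M0[OF assms(1,2,4-8)] unfolding G_eq .
  also have "\<dots> = (\<Sum>i. ennreal (P1 i) * (\<integral>\<^sup>+s. ennreal (erlang_density i 1 s) * G (2*\<sigma>\<^sup>2* s) \<partial>lborel))"
    using L_C[OF \<sigma> G_meas, of x1 y1] unfolding P1_def \<mu>1_def .
  also have "\<dots> = (\<Sum>i. ennreal (P1 i) * (\<Sum>j. ennreal (P2 j) * (\<integral>\<^sup>+s. ennreal (erlang_density i 1 s) * ennreal (erlang_CDF j 1 s) \<partial>lborel)))"
  proof (rule suminf_cong)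
    fix i :: nat
    have "(\<integral>\<^sup>+s. ennreal (erlang_density i 1 s) * G (2*\<sigma>\<^sup>2* s) \<partial>lborel) =
          (\<integral>\<^sup>+s. (\<Sum>j. ennreal (P2 j) * (ennreal (erlang_density i 1 s) * ennreal (erlang_CDF j 1 s))) \<partial>lborel)"
      using \<sigma> unfolding G_def ennreal_suminf_cmult[symmetric] by (simp add: mult_ac)
    also have "\<dots> = (\<Sum>j. \<integral>\<^sup>+s. ennreal (P2 j) * (ennreal (erlang_density i 1 s) * ennreal (erlang_CDF j 1 s)) \<partial>lborel)"
      by (rule nn_integral_suminf) (unfold erlang_CDF_def, measurable)
    also have "\<dots> = (\<Sum>j. ennreal (P2 j) * (\<integral>\<^sup>+s. ennreal (erlang_density i 1 s) * ennreal (erlang_CDF j 1 s) \<partial>lborel))"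
      by (intro suminf_cong nn_integral_cmult) (unfold erlang_CDF_def, measurable)
    finally show "ennreal (P1 i) * (\<integral>\<^sup>+s. ennreal (erlang_density i 1 s) * G (2*\<sigma>\<^sup>2* s) \<partial>lborel) =
      ennreal (P1 i) * (\<Sum>j. ennreal (P2 j) * (\<integral>\<^sup>+s. ennreal (erlang_density i 1 s) * ennreal (erlang_CDF j 1 s) \<partial>lborel))"
      by simp
  qed
  also have "\<dots> = (\<Sum>i. ennreal (P1 i) * (\<Sum>j. ennreal (P2 j) * (\<Sum>n. ennreal (T i j n))))"
    unfolding L_D2 T_def ..
  finally have E1: "emeasure M {\<omega> \<in> space M. sqrt ((X1 \<omega>)^2 + (Y1 \<omega>)^2) > sqrt ((X2 \<omega>)^2 + (Y2 \<omega>)^2)} =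
      (\<Sum>i. ennreal (P1 i) * (\<Sum>j. ennreal (P2 j) * (\<Sum>n. ennreal (T i j n))))" .
  define S where "S i j = (\<Sum>n. T i j n)" for i j
  have T_fin: "(\<Sum>n. ennreal (T i j n)) \<le> 1" for i j unfolding T_def by (rule L_D_bound)
  have T_summ: "summable (T i j)" for i j
    by (rule summable_suminf_not_top) (use T_nn T_fin[of i j] in \<open>auto simp: top_unique\<close>)
  have S_enn: "(\<Sum>n. ennreal (T i j n)) = ennreal (S i j)" for i j
    unfolding S_def using T_summ T_nn by (intro suminf_ennreal2) auto
  have S_nn: "S i j \<ge> 0" for i j unfolding S_def using T_summ T_nn by (intro suminf_nonneg) auto
  have S_le: "S i j \<le> 1" for i j using T_fin[of i j] unfolding S_enn by simp
  have P2_sums: "P2 sums 1" unfolding P2_def[abs_def] using pois_sums mu_nn by simp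
  have P1_sums: "P1 sums 1" unfolding P1_def[abs_def] using pois_sums mu_nn by simp
  define R where "R i = (\<Sum>j. P2 j * S i j)" for i
  have R_summ: "summable (\<lambda>j. P2 j * S i j)" for i
    by (rule summable_comparison_test'[where N=0, OF sums_summable[OF P2_sums]])
       (use P_nn S_nn S_le in \<open>auto intro!: mult_left_le\<close>)
  have R_enn: "(\<Sum>j. ennreal (P2 j) * ennreal (S i j)) = ennreal (R i)" for i
    unfolding R_def using R_summ P_nn S_nn
    by (subst suminf_ennreal2[symmetric]) (auto simp: ennreal_mult)
  have R_nn: "R i \<ge> 0" for i unfolding R_def using R_summ P_nn S_nn by (intro suminf_nonneg) auto
  have R_le: "R i \<le> 1" for i
  proof -
    have "R i \<le> (\<Sum>j. P2 j)" unfolding R_def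
      using R_summ sums_summable[OF P2_sums] P_nn S_le
      by (intro suminf_le) (auto intro!: mult_left_le)
    then show ?thesis using sums_unique[OF P2_sums] by simp
  qed
  have tot_summ: "summable (\<lambda>i. P1 i * R i)"
    by (rule summable_comparison_test'[where N=0, OF sums_summable[OF P1_sums]])
       (use P_nn R_nn R_le in \<open>auto intro!: mult_left_le\<close>)
  have tot_enn: "(\<Sum>i. ennreal (P1 i) * ennreal (R i)) = ennreal (\<Sum>i. P1 i * R i)"
    using tot_summ P_nn R_nn
    by (subst suminf_ennreal2[symmetric]) (auto simp: ennreal_mult)
  have tot_nn: "(\<Sum>i. P1 i * R i) \<ge> 0" using tot_summ P_nn R_nn by (intro suminf_nonneg) auto
  have "measure M {\<omega> \<in> space M. sqrt ((X1 \<omega>)^2 + (Y1 \<omega>)^2) > sqrt ((X2 \<omega>)^2 + (Y2 \<omega>)^2)} =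
        (\<Sum>i. P1 i * R i)"
    unfolding measure_def E1 S_enn R_enn tot_enn using tot_nn by simp
  also have "\<dots> = (\<Sum>i. \<Sum>j. P1 i * P2 j * S i j)"
    unfolding R_def using R_summ by (simp add: suminf_mult mult.assoc)
  also have "\<dots> = (let \<beta> = 1 / (2 * \<sigma>^2);
              lam1 = (sqrt (x1^2 + y1^2))^2;
              lam2 = (sqrt (x2^2 + y2^2))^2
          in (\<Sum>i. \<Sum>j. poisson_pmf_val (lam1 * \<beta>) i * poisson_pmf_val (lam2 * \<beta>) j *
                 ((1/2) ^ ((i+1) + (j+1)) * real (((i+1) + (j+1) - 1) choose (j+1))
                  * hyp2F1 1 (real ((i+1) + (j+1))) (real ((j+1) + 1)) (1/2))))"
  proof -
    have l1: "(sqrt (x1^2 + y1^2))^2 * (1 / (2 * \<sigma>^2)) = \<mu>1" unfolding \<mu>1_def by simp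
    have l2: "(sqrt (x2^2 + y2^2))^2 * (1 / (2 * \<sigma>^2)) = \<mu>2" unfolding \<mu>2_def by simp
    have Sh: "S i j = (1/2) ^ ((i+1) + (j+1)) * real (((i+1) + (j+1) - 1) choose (j+1))
                  * hyp2F1 1 (real ((i+1) + (j+1))) (real ((j+1) + 1)) (1/2)" for i j
      unfolding S_def T_def by (rule T_hyp) (use T_summ[of i j] in \<open>simp add: T_def[abs_def]\<close>)
    show ?thesis unfolding Let_def l1 l2 Sh[symmetric] P1_def P2_def ..
  qed
  finally show ?thesis .
qed


end
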